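(* Let $\langle A,f,c\rangle$ be an instance with $f$ subadditive and let $B\le 1$ be a budget. If $S\subseteq A$ satisfies $p(S)\le B$, then $|S\setminus L|\le 1$.
   Context: An instance $\langle A,f,c\rangle$ consists of a finite set $A$ of $n$ agents, a monotone nondecreasing set function $f:2^A\to[0,1]$ (the reward function), and costs $c=(c_i)_{i\in A}$ with $c_i\ge 0$. For $S\subseteq A$ and $i\in S$ write $f_S(i)=f(S)-f(S\setminus\{i\})$. The payment of a set $S$ is $p(S)=\sum_{i\in S} c_i/f_S(i)$, with the conventions $c_i/f_S(i)=0$ if $c_i=0=f_S(i)$ and $c_i/f_S(i)=\infty$ if $c_i>0=f_S(i)$. $f$ is subadditive if $f(S\cup S')\le f(S)+f(S')$ for all $S,S'\subseteq A$. The set of light agents is $L=\{i\in A: c_i/f(\{i\})\le 1/2\}$; agents in $A\setminus L$ are heavy. *)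

theory Defs
  imports Complex_Main "HOL-Library.Extended_Real"
begin

definition is_instance :: "'a set \<Rightarrow> ('a set \<Rightarrow> real) \<Rightarrow> ('a \<Rightarrow> real) \<Rightarrow> bool" where
  "is_instance A f c \<longleftrightarrow> finite A
     \<and> (\<forall>S. S \<subseteq> A \<longrightarrow> 0 \<le> f S \<and> f S \<le> 1)
     \<and> (\<forall>S T. S \<subseteq> T \<and> T \<subseteq> A \<longrightarrow> f S \<le> f T)
     \<and> (\<forall>i\<in>A. 0 \<le> c i)"

definition subadditive_on :: "'a set \<Rightarrow> ('a set \<Rightarrow> real) \<Rightarrow> bool" where
  "subadditive_on A f \<longleftrightarrow> (\<forall>S S'. S \<subseteq> A \<and> S' \<subseteq> A \<longrightarrow> f (S \<union> S') \<le> f S + f S')"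

definition marg :: "('a set \<Rightarrow> real) \<Rightarrow> 'a set \<Rightarrow> 'a \<Rightarrow> real" where
  "marg f S i = f S - f (S - {i})"

definition ratio :: "real \<Rightarrow> real \<Rightarrow> ereal" where
  "ratio c x = (if x = 0 then (if c = 0 then 0 else \<infinity>) else ereal (c / x))"

definition payment :: "('a set \<Rightarrow> real) \<Rightarrow> ('a \<Rightarrow> real) \<Rightarrow> 'a set \<Rightarrow> ereal" where
  "payment f c S = (\<Sum>i\<in>S. ratio (c i) (marg f S i))"

definition light :: "'a set \<Rightarrow> ('a set \<Rightarrow> real) \<Rightarrow> ('a \<Rightarrow> real) \<Rightarrow> 'a set" where
  "light A f c = {i\<in>A. ratio (c i) (f {i}) \<le> ereal (1/2)}"

end

theory Submission
  imports Defs
begin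

lemma inst_mono: "is_instance A f c \<Longrightarrow> S \<subseteq> T \<Longrightarrow> T \<subseteq> A \<Longrightarrow> f S \<le> f T"
  unfolding is_instance_def by metis

lemma heavy_term:
  assumes inst: "is_instance A f c" and sub: "subadditive_on A f" and SA: "S \<subseteq> A"
    and iS: "i \<in> S" and h: "\<not> ratio (c i) (f {i}) \<le> ereal (1/2)"
  shows "ereal (1/2) < ratio (c i) (marg f S i)"
proof -
  have iA: "i \<in> A" using iS SA by auto
  have ci: "0 \<le> c i" using inst iA unfolding is_instance_def by auto
  have fi: "0 \<le> f {i}" using inst iA unfolding is_instance_def by auto
  have mono: "f (S - {i}) \<le> f S" by (rule inst_mono[OF inst _ SA]) auto
  have "f (S - {i} \<union> {i}) \<le> f (S - {i}) + f {i}" using sub SA iA unfolding subadditive_on_def by (metis Diff_subset empty_subsetI insert_subset subset_trans)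
  moreover have "S - {i} \<union> {i} = S" using iS by auto
  ultimately have le: "marg f S i \<le> f {i}" unfolding marg_def by simp
  have m0: "0 \<le> marg f S i" using mono unfolding marg_def by simp
  show ?thesis
  proof (cases "f {i} = 0")
    case True
    then have "c i \<noteq> 0" using h unfolding ratio_def by (auto simp: zero_ereal_def)
    moreover have "marg f S i = 0" using le m0 True by simp
    ultimately show ?thesis unfolding ratio_def by simp
  next
    case False
    then have fp: "0 < f {i}" using fi by simp
    have hc: "1/2 < c i / f {i}" using h False unfolding ratio_def by auto
    have cp: "0 < c i"
    proof (rule ccontr)
      assume "\<not> 0 < c i"
      then have "c i / f {i} \<le> 0" using fp by (simp add: divide_nonpos_pos)
      then show False using hc by simp
    qed
    show ?thesis
    proof (cases "marg f S i = 0")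
      case True then show ?thesis using cp unfolding ratio_def by simp
    next
      case False
      then have mp: "0 < marg f S i" using m0 by simp
      have "c i / f {i} \<le> c i / marg f S i"
        using mp le ci by (simp add: frac_le)
      then have "1/2 < c i / marg f S i" using hc by linarith
      then show ?thesis using False unfolding ratio_def by simp
    qed
  qed
qed

lemma ratio_nonneg: "0 \<le> c \<Longrightarrow> 0 \<le> x \<Longrightarrow> 0 \<le> ratio c x"
  unfolding ratio_def by auto

theorem mainTheorem4:
  fixes A :: "'a set" and f :: "'a set \<Rightarrow> real" and c :: "'a \<Rightarrow> real"
    and B :: real and S :: "'a set"
  assumes "is_instance A f c"
    and "subadditive_on A f"
    and "B \<le> 1"
    and "S \<subseteq> A"
    and "payment f c S \<le> ereal B"
  shows "card (S - light A f c) \<le> 1"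
proof (rule ccontr)
  assume "\<not> ?thesis"
  have finS: "finite S" using assms(1,4) finite_subset unfolding is_instance_def by metis
  then have "finite (S - light A f c)" by simp
  with \<open>\<not> ?thesis\<close> obtain i j where ij: "i \<in> S - light A f c" "j \<in> S - light A f c" "i \<noteq> j"
    using card_le_Suc0_iff_eq[of "S - light A f c"] by auto
  have hi: "ereal (1/2) < ratio (c i) (marg f S i)"
    using heavy_term[OF assms(1,2,4)] ij assms(4) unfolding light_def by auto
  have hj: "ereal (1/2) < ratio (c j) (marg f S j)"
    using heavy_term[OF assms(1,2,4)] ij assms(4) unfolding light_def by auto
  have nn: "\<And>k. k \<in> S \<Longrightarrow> 0 \<le> ratio (c k) (marg f S k)"
  proof -
    fix k assume k: "k \<in> S"
    have "0 \<le> c k" using assms(1,4) k unfolding is_instance_def by auto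
    moreover have "f (S - {k}) \<le> f S" by (rule inst_mono[OF assms(1) _ assms(4)]) auto
    ultimately show "0 \<le> ratio (c k) (marg f S k)" by (intro ratio_nonneg) (auto simp: marg_def)
  qed
  have "(\<Sum>k\<in>{i,j}. ratio (c k) (marg f S k)) \<le> payment f c S"
    unfolding payment_def using ij finS nn by (intro sum_mono2) auto
  moreover have "(\<Sum>k\<in>{i,j}. ratio (c k) (marg f S k)) = ratio (c i) (marg f S i) + ratio (c j) (marg f S j)"
    using ij by simp
  moreover have "ereal (1/2) + ereal (1/2) < ratio (c i) (marg f S i) + ratio (c j) (marg f S j)"
    using hi hj by (meson ereal_add_strict_mono2)
  ultimately have "ereal (1/2) + ereal (1/2) < ereal B" using assms(5)
    by (metis order_less_le_trans)
  then have "ereal 1 < ereal B" by simp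
  then show False using assms(3) by simp
qed

end
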